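(* For each positive integer $k$, there exists a finite digraph $D$ with stability number $k$ such that for any $k-1$ directed paths $P_1,\ldots,P_{k-1}$ in $D$, the digraph obtained from $D$ by deleting all vertices of $P_1\cup\cdots\cup P_{k-1}$ has stability number $k$.
   Context: The stability number of a digraph is the maximum size of a set of vertices no two of which are joined by an edge (in either direction). A directed path is a sequence of distinct vertices $v_1,\ldots,v_m$ ($m\ge 1$) with an edge from $v_i$ to $v_{i+1}$ for each $i$. *)

theory Defs
  imports Main
begin

definition digraph :: "'a set \<Rightarrow> ('a \<times> 'a) set \<Rightarrow> bool" where
  "digraph V E \<longleftrightarrow> finite V \<and> E \<subseteq> V \<times> V \<and> (\<forall>v. (v, v) \<notin> E)"

definition stable_set :: "'a set \<Rightarrow> ('a \<times> 'a) set \<Rightarrow> 'a set \<Rightarrow> bool" where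
  "stable_set V E S \<longleftrightarrow> S \<subseteq> V \<and>
     (\<forall>x\<in>S. \<forall>y\<in>S. x \<noteq> y \<longrightarrow> (x, y) \<notin> E \<and> (y, x) \<notin> E)"

definition stability_number :: "'a set \<Rightarrow> ('a \<times> 'a) set \<Rightarrow> nat" where
  "stability_number V E = Max {card S | S. stable_set V E S}"

definition dipath :: "'a set \<Rightarrow> ('a \<times> 'a) set \<Rightarrow> 'a list \<Rightarrow> bool" where
  "dipath V E p \<longleftrightarrow> p \<noteq> [] \<and> distinct p \<and> set p \<subseteq> V \<and>
     (\<forall>i. Suc i < length p \<longrightarrow> (p ! i, p ! Suc i) \<in> E)"

definition delete_vertices :: "'a set \<Rightarrow> ('a \<times> 'a) set \<Rightarrow> 'a set \<Rightarrow> 'a set \<times> ('a \<times> 'a) set" where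
  "delete_vertices V E X = (V - X, E \<inter> ((V - X) \<times> (V - X)))"

end

theory Submission
  imports Defs "HOL-Library.Nat_Bijection"
begin


definition anti :: "('a \<times> 'a) set \<Rightarrow> 'a set \<Rightarrow> bool" where
  "anti E A \<longleftrightarrow> (\<forall>u\<in>A. \<forall>v\<in>A. u \<noteq> v \<longrightarrow> (u, v) \<notin> E\<^sup>+)"

definition acyc :: "('a \<times> 'a) set \<Rightarrow> bool" where
  "acyc E \<longleftrightarrow> (\<forall>v. (v, v) \<notin> E\<^sup>+)"

definition propR :: "'a set \<Rightarrow> ('a \<times> 'a) set \<Rightarrow> nat \<Rightarrow> bool" where
  "propR V E b \<longleftrightarrow> digraph V E \<and> acyc E \<and> (\<exists>S. stable_set V E S \<and> card S = b) \<and>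
     (\<forall>S. stable_set V E S \<longrightarrow> card S \<le> b) \<and>
     (\<forall>B\<subseteq>V. (\<forall>S. stable_set V E S \<and> card S = b \<longrightarrow> B \<inter> S \<noteq> {}) \<longrightarrow>
        (\<exists>A\<subseteq>B. card A = b \<and> anti E A))"

lemma dipath_reach:
  assumes "dipath V E p" "i < j" "j < length p"
  shows "(p ! i, p ! j) \<in> E\<^sup>+"
  using assms(2,3)
proof (induction j)
  case 0 then show ?case by simp
next
  case (Suc j)
  have e: "(p ! j, p ! Suc j) \<in> E" using assms(1) Suc.prems unfolding dipath_def by blast
  show ?case
  proof (cases "i = j")
    case True then show ?thesis using e by auto
  next
    case False
    then have "(p ! i, p ! j) \<in> E\<^sup>+" using Suc by auto
    then show ?thesis using e by (rule trancl_into_trancl)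
  qed
qed

lemma anti_path_le1:
  assumes "anti E A" "dipath V E p" "a \<in> A \<inter> set p" "a' \<in> A \<inter> set p"
  shows "a = a'"
proof (rule ccontr)
  assume ne: "a \<noteq> a'"
  have "a \<in> set p" "a' \<in> set p" using assms(3,4) by auto
  then obtain i j where i: "i < length p" "p ! i = a" and j: "j < length p" "p ! j = a'"
    unfolding in_set_conv_nth by blast
  have "i \<noteq> j" using ne i j by auto
  then consider "i < j" | "j < i" by linarith
  then show False
  proof cases
    case 1
    then have "(a, a') \<in> E\<^sup>+" using dipath_reach[OF assms(2) 1 j(1)] i j by simp
    moreover have "a \<in> A" "a' \<in> A" using assms(3,4) by auto
    ultimately show False using assms(1) ne unfolding anti_def by blast
  next
    case 2
    then have "(a', a) \<in> E\<^sup>+" using dipath_reach[OF assms(2) 2 i(1)] i j by simp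
    moreover have "a \<in> A" "a' \<in> A" using assms(3,4) by auto
    moreover have "a' \<noteq> a" using ne by simp
    ultimately show False using assms(1) unfolding anti_def by blast
  qed
qed

lemma anti_card_paths:
  assumes "anti E A" "\<forall>p\<in>set ps. dipath V E p" "A \<subseteq> (\<Union>p\<in>set ps. set p)"
  shows "card A \<le> length ps"
proof -
  have eq: "A = (\<Union>p\<in>set ps. A \<inter> set p)" using assms(3) by blast
  have c1: "card (\<Union>p\<in>set ps. A \<inter> set p) \<le> (\<Sum>p\<in>set ps. card (A \<inter> set p))"
    by (rule card_UN_le) simp
  have "card A = card (\<Union>p\<in>set ps. A \<inter> set p)" by (rule arg_cong[OF eq])
  then have "card A \<le> (\<Sum>p\<in>set ps. card (A \<inter> set p))" using c1 by linarith
  also have "\<dots> \<le> (\<Sum>p\<in>set ps. 1)"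
  proof (rule sum_mono)
    fix p assume p: "p \<in> set ps"
    show "card (A \<inter> set p) \<le> 1"
    proof -
      have f: "finite (A \<inter> set p)" by simp
      have "\<forall>a1\<in>A \<inter> set p. \<forall>a2\<in>A \<inter> set p. a1 = a2"
        using anti_path_le1[OF assms(1) bspec[OF assms(2) p]] by blast
      then show ?thesis using card_le_Suc0_iff_eq[OF f] by simp
    qed
  qed
  also have "\<dots> = card (set ps)" by simp
  also have "\<dots> \<le> length ps" by (rule card_length)
  finally show ?thesis .
qed

lemma stab_num_eq:
  assumes "finite V" "stable_set V E S0" "card S0 = k" "\<forall>S. stable_set V E S \<longrightarrow> card S \<le> k"
  shows "stability_number V E = k"
  unfolding stability_number_def
proof (rule Max_eqI)
  show "finite {card S |S. stable_set V E S}"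
    by (rule finite_subset[of _ "{..k}"]) (use assms(4) in auto)
  show "\<And>y. y \<in> {card S |S. stable_set V E S} \<Longrightarrow> y \<le> k" using assms(4) by auto
  show "k \<in> {card S |S. stable_set V E S}" using assms(2,3) by auto
qed

lemma propR_main:
  fixes V :: "'a set"
  assumes R: "propR V E k" and k: "k \<ge> 1"
  shows "stability_number V E = k \<and>
    (\<forall>ps. length ps = k - 1 \<and> (\<forall>p\<in>set ps. dipath V E p) \<longrightarrow>
       (let (V', E') = delete_vertices V E (\<Union>p\<in>set ps. set p)
        in stability_number V' E' = k))"
proof -
  from R have dg: "digraph V E" and ac: "acyc E" and ex: "\<exists>S. stable_set V E S \<and> card S = k"
    and le: "\<forall>S. stable_set V E S \<longrightarrow> card S \<le> k"
    and RR: "\<forall>B\<subseteq>V. (\<forall>S. stable_set V E S \<and> card S = k \<longrightarrow> B \<inter> S \<noteq> {}) \<longrightarrow>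
        (\<exists>A\<subseteq>B. card A = k \<and> anti E A)"
    unfolding propR_def by blast+
  have fin: "finite V" using dg unfolding digraph_def by blast
  have part1: "stability_number V E = k" using ex le stab_num_eq[OF fin] by blast
  have part2: "stability_number (V - X) (E \<inter> ((V - X) \<times> (V - X))) = k"
    if ps: "length ps = k - 1" "\<forall>p\<in>set ps. dipath V E p" and X: "X = (\<Union>p\<in>set ps. set p)" for ps X
  proof -
    have XV: "X \<subseteq> V" using ps(2) X unfolding dipath_def by blast
    have "\<exists>S. stable_set V E S \<and> card S = k \<and> X \<inter> S = {}"
    proof (rule ccontr)
      assume "\<not> ?thesis"
      then have "\<forall>S. stable_set V E S \<and> card S = k \<longrightarrow> X \<inter> S \<noteq> {}" by blast
      then obtain A where A: "A \<subseteq> X" "card A = k" "anti E A" using RR XV by blast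
      have "card A \<le> length ps" using anti_card_paths[OF A(3) ps(2)] A(1) X by blast
      then show False using A(2) ps(1) k by linarith
    qed
    then obtain S where S: "stable_set V E S" "card S = k" "X \<inter> S = {}" by blast
    have S': "stable_set (V - X) (E \<inter> ((V - X) \<times> (V - X))) S"
      using S unfolding stable_set_def by blast
    have le': "\<forall>S. stable_set (V - X) (E \<inter> ((V - X) \<times> (V - X))) S \<longrightarrow> card S \<le> k"
    proof (intro allI impI)
      fix T assume "stable_set (V - X) (E \<inter> ((V - X) \<times> (V - X))) T"
      then have "stable_set V E T" unfolding stable_set_def by blast
      then show "card T \<le> k" using le by blast
    qed
    show ?thesis using stab_num_eq[OF _ S' S(2) le'] fin by blast
  qed
  show ?thesis
  proof (intro conjI allI impI)
    show "stability_number V E = k" by (rule part1)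
    fix ps assume h: "length ps = k - 1 \<and> (\<forall>p\<in>set ps. dipath V E p)"
    have "stability_number (V - (\<Union>p\<in>set ps. set p)) (E \<inter> ((V - (\<Union>p\<in>set ps. set p)) \<times> (V - (\<Union>p\<in>set ps. set p)))) = k"
      using part2[OF conjunct1[OF h] conjunct2[OF h] refl] .
    then show "let (V', E') = delete_vertices V E (\<Union>p\<in>set ps. set p) in stability_number V' E' = k"
      unfolding delete_vertices_def Let_def by simp
  qed
qed



definition enc :: "nat \<Rightarrow> nat \<Rightarrow> nat" where "enc x v = prod_encode (x, v)"
definition fx :: "nat \<Rightarrow> nat" where "fx u = fst (prod_decode u)"
definition sx :: "nat \<Rightarrow> nat" where "sx u = snd (prod_decode u)"

lemma fx_enc [simp]: "fx (enc x v) = x" by (simp add: fx_def enc_def)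
lemma sx_enc [simp]: "sx (enc x v) = v" by (simp add: sx_def enc_def)
lemma enc_eq [simp]: "enc x v = enc y w \<longleftrightarrow> x = y \<and> v = w" by (simp add: enc_def)
lemma enc_fx_sx [simp]: "enc (fx u) (sx u) = u" by (simp add: enc_def fx_def sx_def)

definition pv :: "nat set \<Rightarrow> (nat \<Rightarrow> nat set) \<Rightarrow> nat set" where
  "pv VA Vf = {enc x v | x v. x \<in> VA \<and> v \<in> Vf x}"

definition pe :: "nat set \<Rightarrow> (nat \<times> nat) set \<Rightarrow> (nat \<Rightarrow> nat set) \<Rightarrow> (nat \<Rightarrow> (nat \<times> nat) set) \<Rightarrow> (nat \<times> nat) set" where
  "pe VA EA Vf Ef = {(enc x v, enc x v') | x v v'. x \<in> VA \<and> (v, v') \<in> Ef x} \<union>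
     {(enc x v, enc y v') | x y v v'. (x, y) \<in> EA \<and> v \<in> Vf x \<and> v' \<in> Vf y}"

definition glue :: "nat set \<Rightarrow> (nat \<Rightarrow> nat set) \<Rightarrow> nat set" where
  "glue I T = {enc x v | x v. x \<in> I \<and> v \<in> T x}"

lemma pv_mem: "u \<in> pv VA Vf \<longleftrightarrow> fx u \<in> VA \<and> sx u \<in> Vf (fx u)"
proof
  assume "u \<in> pv VA Vf"
  then obtain x v where "u = enc x v" "x \<in> VA" "v \<in> Vf x" unfolding pv_def by blast
  then show "fx u \<in> VA \<and> sx u \<in> Vf (fx u)" by simp
next
  assume h: "fx u \<in> VA \<and> sx u \<in> Vf (fx u)"
  have "u = enc (fx u) (sx u)" by simp
  then show "u \<in> pv VA Vf" using h unfolding pv_def by blast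
qed

lemma glue_mem: "u \<in> glue I T \<longleftrightarrow> fx u \<in> I \<and> sx u \<in> T (fx u)"
proof
  assume "u \<in> glue I T"
  then obtain x v where "u = enc x v" "x \<in> I" "v \<in> T x" unfolding glue_def by blast
  then show "fx u \<in> I \<and> sx u \<in> T (fx u)" by simp
next
  assume h: "fx u \<in> I \<and> sx u \<in> T (fx u)"
  have "u = enc (fx u) (sx u)" by simp
  then show "u \<in> glue I T" using h unfolding glue_def by blast
qed

lemma pe_edge:
  assumes "(a, b) \<in> pe VA EA Vf Ef"
  shows "(fx a = fx b \<and> fx a \<in> VA \<and> (sx a, sx b) \<in> Ef (fx a)) \<or>
         ((fx a, fx b) \<in> EA \<and> sx a \<in> Vf (fx a) \<and> sx b \<in> Vf (fx b))"
  using assms unfolding pe_def by auto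

lemma pe_intro1: "x \<in> VA \<Longrightarrow> (v, v') \<in> Ef x \<Longrightarrow> (enc x v, enc x v') \<in> pe VA EA Vf Ef"
  unfolding pe_def by blast

lemma pe_intro2: "(x, y) \<in> EA \<Longrightarrow> v \<in> Vf x \<Longrightarrow> v' \<in> Vf y \<Longrightarrow> (enc x v, enc y v') \<in> pe VA EA Vf Ef"
  unfolding pe_def by blast

lemma pe_reach:
  assumes "(a, b) \<in> (pe VA EA Vf Ef)\<^sup>+"
  shows "(fx a = fx b \<and> (sx a, sx b) \<in> (Ef (fx a))\<^sup>+) \<or> (fx a, fx b) \<in> EA\<^sup>+"
  using assms
proof (induction rule: trancl_induct)
  case (base b)
  then show ?case using pe_edge[OF base] by auto
next
  case (step b c)
  from pe_edge[OF step(2)] consider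
      "fx b = fx c" "(sx b, sx c) \<in> Ef (fx b)" | "(fx b, fx c) \<in> EA" by blast
  then show ?case
  proof cases
    case 1
    then show ?thesis using step(3) by (auto intro: trancl_into_trancl)
  next
    case 2
    then show ?thesis using step(3) by (auto intro: trancl_into_trancl)
  qed
qed

lemma glue_card:
  assumes "finite I" "\<forall>x\<in>I. finite (T x)"
  shows "card (glue I T) = (\<Sum>x\<in>I. card (T x))"
proof -
  have eq: "glue I T = (\<lambda>(x, v). enc x v) ` (SIGMA x:I. T x)"
    unfolding glue_def by auto
  have inj: "inj_on (\<lambda>(x, v). enc x v) (SIGMA x:I. T x)"
    by (auto simp: inj_on_def)
  show ?thesis unfolding eq card_image[OF inj] using assms by simp
qed

lemma glue_stable:
  assumes dg: "digraph VA EA" and I: "stable_set VA EA I"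
    and T: "\<forall>x\<in>I. stable_set (Vf x) (Ef x) (T x)"
  shows "stable_set (pv VA Vf) (pe VA EA Vf Ef) (glue I T)"
  unfolding stable_set_def
proof (intro conjI ballI impI)
  show "glue I T \<subseteq> pv VA Vf"
    using I T unfolding stable_set_def glue_mem pv_mem subset_iff by blast
  fix a b assume a: "a \<in> glue I T" and b: "b \<in> glue I T" and ne: "a \<noteq> b"
  have noloop: "\<forall>v. (v, v) \<notin> EA" using dg unfolding digraph_def by blast
  have claim: "(a', b') \<notin> pe VA EA Vf Ef" if a': "a' \<in> glue I T" and b': "b' \<in> glue I T" and ne': "a' \<noteq> b'" for a' b'
  proof
    assume e: "(a', b') \<in> pe VA EA Vf Ef"
    from pe_edge[OF e] show False
    proof
      assume h: "fx a' = fx b' \<and> fx a' \<in> VA \<and> (sx a', sx b') \<in> Ef (fx a')"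
      have "sx a' \<noteq> sx b'" using ne' h by (metis enc_fx_sx)
      moreover have "sx a' \<in> T (fx a')" "sx b' \<in> T (fx a')" "fx a' \<in> I"
        using a' b' h unfolding glue_mem by auto
      ultimately show False using T h unfolding stable_set_def by blast
    next
      assume h: "(fx a', fx b') \<in> EA \<and> sx a' \<in> Vf (fx a') \<and> sx b' \<in> Vf (fx b')"
      have "fx a' \<noteq> fx b'" using h noloop by metis
      moreover have "fx a' \<in> I" "fx b' \<in> I" using a' b' unfolding glue_mem by auto
      ultimately show False using I h unfolding stable_set_def by blast
    qed
  qed
  show "(a, b) \<notin> pe VA EA Vf Ef" using claim a b ne by blast
  show "(b, a) \<notin> pe VA EA Vf Ef" using claim a b ne by blast
qed

lemma glue_anti:
  assumes ac: "acyc EA" and I: "anti EA I"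
    and T: "\<forall>x\<in>I. anti (Ef x) (T x)"
  shows "anti (pe VA EA Vf Ef) (glue I T)"
  unfolding anti_def
proof (intro ballI impI)
  fix a b assume a: "a \<in> glue I T" and b: "b \<in> glue I T" and ne: "a \<noteq> b"
  show "(a, b) \<notin> (pe VA EA Vf Ef)\<^sup>+"
  proof
    assume r: "(a, b) \<in> (pe VA EA Vf Ef)\<^sup>+"
    from pe_reach[OF r] show False
    proof
      assume h: "fx a = fx b \<and> (sx a, sx b) \<in> (Ef (fx a))\<^sup>+"
      have "sx a \<noteq> sx b" using ne h by (metis enc_fx_sx)
      moreover have "sx a \<in> T (fx a)" "sx b \<in> T (fx a)" "fx a \<in> I"
        using a b h unfolding glue_mem by auto
      ultimately show False using T h unfolding anti_def by blast
    next
      assume h: "(fx a, fx b) \<in> EA\<^sup>+"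
      have "fx a \<noteq> fx b" using h ac unfolding acyc_def by metis
      moreover have "fx a \<in> I" "fx b \<in> I" using a b unfolding glue_mem by auto
      ultimately show False using I h unfolding anti_def by blast
    qed
  qed
qed

lemma glue_fibers:
  assumes "S \<subseteq> pv VA Vf"
  shows "S = glue (fx ` S) (\<lambda>x. sx ` {a\<in>S. fx a = x})"
proof
  show "S \<subseteq> glue (fx ` S) (\<lambda>x. sx ` {a\<in>S. fx a = x})"
    unfolding glue_mem subset_iff by auto
  show "glue (fx ` S) (\<lambda>x. sx ` {a\<in>S. fx a = x}) \<subseteq> S"
    unfolding glue_mem subset_iff by (auto, metis enc_fx_sx)
qed



lemma propR_digraph: "propR V E b \<Longrightarrow> digraph V E" unfolding propR_def by blast
lemma propR_acyc: "propR V E b \<Longrightarrow> acyc E" unfolding propR_def by blast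
lemma propR_ex: "propR V E b \<Longrightarrow> \<exists>S. stable_set V E S \<and> card S = b" unfolding propR_def by blast
lemma propR_le: "propR V E b \<Longrightarrow> stable_set V E S \<Longrightarrow> card S \<le> b" unfolding propR_def by blast
lemma propR_R: "propR V E b \<Longrightarrow> B \<subseteq> V \<Longrightarrow> (\<forall>S. stable_set V E S \<and> card S = b \<longrightarrow> B \<inter> S \<noteq> {}) \<Longrightarrow>
   \<exists>A\<subseteq>B. card A = b \<and> anti E A" unfolding propR_def by blast

lemma digraph_fin: "digraph V E \<Longrightarrow> finite V" unfolding digraph_def by blast
lemma digraph_sub: "digraph V E \<Longrightarrow> (u, v) \<in> E \<Longrightarrow> u \<in> V \<and> v \<in> V" unfolding digraph_def by blast
lemma digraph_noloop: "digraph V E \<Longrightarrow> (v, v) \<notin> E" unfolding digraph_def by blast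
lemma stable_sub: "stable_set V E S \<Longrightarrow> S \<subseteq> V" unfolding stable_set_def by blast
lemma stable_noedge: "stable_set V E S \<Longrightarrow> a \<in> S \<Longrightarrow> b \<in> S \<Longrightarrow> a \<noteq> b \<Longrightarrow> (a, b) \<notin> E"
  unfolding stable_set_def by blast

lemma stable_fin: "digraph V E \<Longrightarrow> stable_set V E S \<Longrightarrow> finite S"
  using digraph_fin stable_sub finite_subset by metis

lemma pv_glue: "pv VA Vf = glue VA Vf"
  unfolding pv_def glue_def by simp

lemma stable_card_le:
  assumes dgA: "digraph VA EA"
    and fib: "\<forall>x\<in>VA. propR (Vf x) (Ef x) (w x)"
    and W1: "\<forall>I. stable_set VA EA I \<longrightarrow> sum w I \<le> W"
    and S: "stable_set (pv VA Vf) (pe VA EA Vf Ef) S"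
  shows "card S \<le> W"
proof -
  have Spv: "S \<subseteq> pv VA Vf" using S by (rule stable_sub)
  define I where "I = fx ` S"
  define F where "F = (\<lambda>x. sx ` {a\<in>S. fx a = x})"
  have Seq: "S = glue I F" unfolding I_def F_def by (rule glue_fibers[OF Spv])
  have IA: "I \<subseteq> VA"
  proof
    fix x assume "x \<in> I"
    then obtain a where "a \<in> S" "x = fx a" unfolding I_def by blast
    then show "x \<in> VA" using Spv pv_mem by blast
  qed
  have finA: "finite VA" using dgA by (rule digraph_fin)
  have finI: "finite I" using IA finA finite_subset by blast
  have Fsub: "F x \<subseteq> Vf x" for x
  proof
    fix v assume "v \<in> F x"
    then obtain a where "a \<in> S" "fx a = x" "sx a = v" unfolding F_def by blast
    then show "v \<in> Vf x" using Spv pv_mem by blast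
  qed
  have Fstab: "stable_set (Vf x) (Ef x) (F x)" if x: "x \<in> I" for x
  proof -
    have xA: "x \<in> VA" using x IA by blast
    have "(v, v') \<notin> Ef x" if v: "v \<in> F x" and v': "v' \<in> F x" and ne: "v \<noteq> v'" for v v'
    proof
      assume e: "(v, v') \<in> Ef x"
      obtain a where a: "a \<in> S" "fx a = x" "sx a = v" using v unfolding F_def by blast
      obtain b where b: "b \<in> S" "fx b = x" "sx b = v'" using v' unfolding F_def by blast
      have aeq: "a = enc x v" using a enc_fx_sx by metis
      have beq: "b = enc x v'" using b enc_fx_sx by metis
      have ab: "a \<noteq> b" unfolding aeq beq using ne by simp
      have "(a, b) \<in> pe VA EA Vf Ef" unfolding aeq beq by (rule pe_intro1[where Ef=Ef, OF xA e])
      then show False using stable_noedge[OF S a(1) b(1) ab] by blast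
    qed
    then show ?thesis unfolding stable_set_def using Fsub by blast
  qed
  have Istab: "stable_set VA EA I"
  proof -
    have "(x, y) \<notin> EA" if x: "x \<in> I" and y: "y \<in> I" and ne: "x \<noteq> y" for x y
    proof
      assume e: "(x, y) \<in> EA"
      obtain a where a: "a \<in> S" "fx a = x" using x unfolding I_def by blast
      obtain b where b: "b \<in> S" "fx b = y" using y unfolding I_def by blast
      have va: "sx a \<in> Vf x" using a Spv pv_mem by blast
      have vb: "sx b \<in> Vf y" using b Spv pv_mem by blast
      have aeq: "a = enc x (sx a)" using a enc_fx_sx by metis
      have beq: "b = enc y (sx b)" using b enc_fx_sx by metis
      have ab: "a \<noteq> b" using a(2) b(2) ne by metis
      have "(a, b) \<in> pe VA EA Vf Ef" by (subst aeq, subst beq, rule pe_intro2[OF e va vb])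
      then show False using stable_noedge[OF S a(1) b(1) ab] by blast
    qed
    then show ?thesis unfolding stable_set_def using IA by blast
  qed
  have finF: "\<forall>x\<in>I. finite (F x)"
  proof
    fix x assume "x \<in> I"
    then have "propR (Vf x) (Ef x) (w x)" using fib IA by blast
    then have "finite (Vf x)" using propR_digraph digraph_fin by blast
    then show "finite (F x)" using Fsub finite_subset by blast
  qed
  have "card S = (\<Sum>x\<in>I. card (F x))" using glue_card[OF finI finF] Seq by simp
  also have "\<dots> \<le> (\<Sum>x\<in>I. w x)"
  proof (rule sum_mono)
    fix x assume "x \<in> I"
    then have "propR (Vf x) (Ef x) (w x)" using fib IA by blast
    then show "card (F x) \<le> w x" using propR_le Fstab \<open>x \<in> I\<close> by blast
  qed
  also have "\<dots> \<le> W" using W1 Istab by blast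
  finally show ?thesis .
qed



theorem prod_propR:
  assumes dgA: "digraph VA EA" and acA: "acyc EA"
    and fib: "\<forall>x\<in>VA. propR (Vf x) (Ef x) (w x)"
    and W1: "\<forall>I. stable_set VA EA I \<longrightarrow> sum w I \<le> W"
    and W2: "\<exists>I. stable_set VA EA I \<and> sum w I = W"
    and C: "\<forall>Y\<subseteq>VA. (\<forall>I. stable_set VA EA I \<and> sum w I = W \<longrightarrow> Y \<inter> I \<noteq> {}) \<longrightarrow>
              (\<exists>I\<subseteq>Y. stable_set VA EA I \<and> sum w I = W \<and> anti EA I)"
  shows "propR (pv VA Vf) (pe VA EA Vf Ef) W"
proof -
  let ?V = "pv VA Vf" and ?E = "pe VA EA Vf Ef"
  have finA: "finite VA" using dgA by (rule digraph_fin)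
  have finVf: "finite (Vf x)" if "x \<in> VA" for x
    using fib that propR_digraph digraph_fin by blast
  have dgf: "digraph (Vf x) (Ef x)" if "x \<in> VA" for x
    using fib that propR_digraph by blast
  have acf: "acyc (Ef x)" if "x \<in> VA" for x
    using fib that propR_acyc by blast
  have glue_W: "stable_set ?V ?E (glue I T) \<and> card (glue I T) = W"
    if I: "stable_set VA EA I" "sum w I = W"
    and T: "\<forall>x\<in>I. stable_set (Vf x) (Ef x) (T x) \<and> card (T x) = w x" for I T
  proof
    show "stable_set ?V ?E (glue I T)" using glue_stable[OF dgA I(1)] T by blast
    have IA: "I \<subseteq> VA" using I(1) by (rule stable_sub)
    have finI: "finite I" using IA finA finite_subset by blast
    have finT: "\<forall>x\<in>I. finite (T x)"
      using T IA dgf stable_fin by blast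
    have "card (glue I T) = (\<Sum>x\<in>I. card (T x))" by (rule glue_card[OF finI finT])
    also have "\<dots> = (\<Sum>x\<in>I. w x)" using T by (intro sum.cong) auto
    finally show "card (glue I T) = W" using I(2) by simp
  qed
  have dg: "digraph ?V ?E"
    unfolding digraph_def
  proof (intro conjI allI)
    have "pv VA Vf = (\<lambda>(x, v). enc x v) ` (SIGMA x:VA. Vf x)" unfolding pv_def by auto
    then show "finite ?V" using finA finVf by simp
    show "?E \<subseteq> ?V \<times> ?V"
    proof
      fix e assume e: "e \<in> ?E"
      obtain a b where ab: "e = (a, b)" by (cases e)
      from pe_edge[of a b] e ab show "e \<in> ?V \<times> ?V"
      proof -
        from pe_edge[of a b] e ab consider
          "fx a = fx b" "fx a \<in> VA" "(sx a, sx b) \<in> Ef (fx a)"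
          | "(fx a, fx b) \<in> EA" "sx a \<in> Vf (fx a)" "sx b \<in> Vf (fx b)" by blast
        then show ?thesis
        proof cases
          case 1
          then have "sx a \<in> Vf (fx a)" "sx b \<in> Vf (fx a)" using digraph_sub[OF dgf] by blast+
          then show ?thesis using 1 ab by (simp add: pv_mem)
        next
          case 2
          then have "fx a \<in> VA" "fx b \<in> VA" using digraph_sub[OF dgA] by blast+
          then show ?thesis using 2 ab by (simp add: pv_mem)
        qed
      qed
    qed
    fix v show "(v, v) \<notin> ?E"
    proof
      assume e: "(v, v) \<in> ?E"
      from pe_edge[OF e] show False
        using digraph_noloop[OF dgA] digraph_noloop[OF dgf] by blast
    qed
  qed
  have ac: "acyc ?E"
    unfolding acyc_def
  proof (intro allI notI)
    fix a assume r: "(a, a) \<in> ?E\<^sup>+"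
    obtain c where c: "(a, c) \<in> ?E" using tranclD[OF r] by blast
    have aA: "fx a \<in> VA" using pe_edge[OF c] digraph_sub[OF dgA] by blast
    from pe_reach[OF r] show False
    proof
      assume "fx a = fx a \<and> (sx a, sx a) \<in> (Ef (fx a))\<^sup>+"
      then show False using acf[OF aA] unfolding acyc_def by blast
    next
      assume "(fx a, fx a) \<in> EA\<^sup>+"
      then show False using acA unfolding acyc_def by blast
    qed
  qed
  have ex: "\<exists>S. stable_set ?V ?E S \<and> card S = W"
  proof -
    obtain I where I: "stable_set VA EA I" "sum w I = W" using W2 by blast
    have IA: "I \<subseteq> VA" using I(1) by (rule stable_sub)
    have "\<forall>x\<in>I. \<exists>T. stable_set (Vf x) (Ef x) T \<and> card T = w x"
      using fib IA propR_ex by blast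
    then obtain T where T: "\<forall>x\<in>I. stable_set (Vf x) (Ef x) (T x) \<and> card (T x) = w x"
      by (rule bchoice[elim_format]) blast
    show ?thesis using glue_W[OF I T] by blast
  qed
  have le: "\<forall>S. stable_set ?V ?E S \<longrightarrow> card S \<le> W"
    using stable_card_le[OF dgA fib W1] by blast
  have RR: "\<exists>A\<subseteq>B. card A = W \<and> anti ?E A"
    if B: "B \<subseteq> ?V" and hit: "\<forall>S. stable_set ?V ?E S \<and> card S = W \<longrightarrow> B \<inter> S \<noteq> {}" for B
  proof -
    define Bx where "Bx = (\<lambda>x. {v. enc x v \<in> B})"
    define Y where "Y = {x\<in>VA. \<forall>T. stable_set (Vf x) (Ef x) T \<and> card T = w x \<longrightarrow> Bx x \<inter> T \<noteq> {}}"
    have YA: "Y \<subseteq> VA" unfolding Y_def by blast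
    have Yhit: "\<forall>I. stable_set VA EA I \<and> sum w I = W \<longrightarrow> Y \<inter> I \<noteq> {}"
    proof (intro allI impI notI)
      fix I assume I: "stable_set VA EA I \<and> sum w I = W" and e: "Y \<inter> I = {}"
      have IA: "I \<subseteq> VA" using I stable_sub by blast
      have "\<forall>x\<in>I. \<exists>T. stable_set (Vf x) (Ef x) T \<and> card T = w x \<and> Bx x \<inter> T = {}"
      proof
        fix x assume x: "x \<in> I"
        then have "x \<notin> Y" using e by blast
        then show "\<exists>T. stable_set (Vf x) (Ef x) T \<and> card T = w x \<and> Bx x \<inter> T = {}"
          using x IA unfolding Y_def by blast
      qed
      then obtain T where T: "\<forall>x\<in>I. stable_set (Vf x) (Ef x) (T x) \<and> card (T x) = w x \<and> Bx x \<inter> T x = {}"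
        by (rule bchoice[elim_format]) blast
      have g: "stable_set ?V ?E (glue I T) \<and> card (glue I T) = W"
        using glue_W[of I T] I T by blast
      then obtain u where u: "u \<in> B" "u \<in> glue I T" using hit by blast
      have "fx u \<in> I" "sx u \<in> T (fx u)" using u(2) unfolding glue_mem by auto
      moreover have "sx u \<in> Bx (fx u)" using u(1) unfolding Bx_def by simp
      ultimately show False using T by blast
    qed
    obtain I where I: "I \<subseteq> Y" "stable_set VA EA I" "sum w I = W" "anti EA I"
      using C YA Yhit by blast
    have IA: "I \<subseteq> VA" using I(2) stable_sub by blast
    have "\<forall>x\<in>I. \<exists>A\<subseteq>Bx x. card A = w x \<and> anti (Ef x) A"
    proof
      fix x assume x: "x \<in> I"
      have xA: "x \<in> VA" using x IA by blast
      have sub: "Bx x \<subseteq> Vf x"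
      proof
        fix v assume "v \<in> Bx x"
        then have "enc x v \<in> ?V" using B unfolding Bx_def by blast
        then show "v \<in> Vf x" unfolding pv_mem by simp
      qed
      have "\<forall>T. stable_set (Vf x) (Ef x) T \<and> card T = w x \<longrightarrow> Bx x \<inter> T \<noteq> {}"
        using x I(1) unfolding Y_def by blast
      then show "\<exists>A\<subseteq>Bx x. card A = w x \<and> anti (Ef x) A"
        using propR_R[OF bspec[OF fib xA] sub] by blast
    qed
    then obtain A where A: "\<forall>x\<in>I. A x \<subseteq> Bx x \<and> card (A x) = w x \<and> anti (Ef x) (A x)"
      by (rule bchoice[elim_format]) blast
    have finI: "finite I" using IA finA finite_subset by blast
    have finAx: "\<forall>x\<in>I. finite (A x)"
    proof
      fix x assume x: "x \<in> I"
      have "A x \<subseteq> Vf x"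
      proof
        fix v assume "v \<in> A x"
        then have "v \<in> Bx x" using A x by blast
        then have "enc x v \<in> ?V" using B unfolding Bx_def by blast
        then show "v \<in> Vf x" unfolding pv_mem by simp
      qed
      then show "finite (A x)" using finVf x IA finite_subset by blast
    qed
    have "glue I A \<subseteq> B"
    proof
      fix u assume "u \<in> glue I A"
      then have "fx u \<in> I" "sx u \<in> A (fx u)" unfolding glue_mem by auto
      then have "sx u \<in> Bx (fx u)" using A by blast
      then show "u \<in> B" unfolding Bx_def by simp
    qed
    moreover have "card (glue I A) = W"
    proof -
      have "card (glue I A) = (\<Sum>x\<in>I. card (A x))" by (rule glue_card[OF finI finAx])
      also have "\<dots> = (\<Sum>x\<in>I. w x)" using A by (intro sum.cong) auto
      finally show ?thesis using I(3) by simp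
    qed
    moreover have "anti ?E (glue I A)"
      using glue_anti[OF acA I(4)] A by blast
    ultimately show ?thesis by blast
  qed
  show ?thesis unfolding propR_def using dg ac ex le RR by blast
qed



definition XVb :: "nat \<Rightarrow> nat set" where "XVb b = {..4*b}"

definition xadj :: "nat \<Rightarrow> nat \<Rightarrow> nat \<Rightarrow> bool" where
  "xadj b u v \<longleftrightarrow> \<not>(v < 2*b \<and> odd u \<and> odd v) \<and> \<not>(v < 2*b \<and> even u \<and> v = u+1) \<and>
     \<not>(v = 2*b \<and> even u) \<and> \<not>(u = 2*b \<and> v \<le> 3*b) \<and> \<not>(2*b < u \<and> u \<le> 3*b \<and> v = u + b) \<and> \<not>(3*b < u)"

definition XEb :: "nat \<Rightarrow> (nat \<times> nat) set" where
  "XEb b = {(u, v). u < v \<and> v \<le> 4*b \<and> xadj b u v}"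

definition heavy :: "nat \<Rightarrow> nat \<Rightarrow> bool" where
  "heavy b v \<longleftrightarrow> (v < 2*b \<and> even v) \<or> (2*b < v \<and> v \<le> 3*b)"

definition xw :: "nat \<Rightarrow> nat \<Rightarrow> nat" where
  "xw b v = (if heavy b v then b - 1 else 1)"

definition sadj :: "nat \<Rightarrow> nat \<Rightarrow> nat \<Rightarrow> bool" where
  "sadj b u v \<longleftrightarrow> (u < v \<and> xadj b u v) \<or> (v < u \<and> xadj b v u)"

lemma XEb_iff: "(u, v) \<in> XEb b \<longleftrightarrow> u < v \<and> v \<le> 4*b \<and> xadj b u v"
  unfolding XEb_def by simp

lemma sadj_iff: "u \<le> 4*b \<Longrightarrow> v \<le> 4*b \<Longrightarrow> sadj b u v \<longleftrightarrow> (u, v) \<in> XEb b \<or> (v, u) \<in> XEb b"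
  unfolding sadj_def XEb_iff by auto

lemma X_digraph: "digraph (XVb b) (XEb b)"
  unfolding digraph_def XVb_def XEb_def by auto

lemma X_mono: "(u, v) \<in> (XEb b)\<^sup>+ \<Longrightarrow> u < v"
  by (induction rule: trancl_induct) (auto simp: XEb_iff)

lemma X_acyc: "acyc (XEb b)"
  unfolding acyc_def using X_mono by blast

lemma closed_reach:
  assumes "(u, v) \<in> E\<^sup>+" "\<And>w. (u, w) \<in> E \<Longrightarrow> w \<in> Z" "\<And>x y. (x, y) \<in> E \<Longrightarrow> x \<in> Z \<Longrightarrow> y \<in> Z"
  shows "v \<in> Z"
  using assms(1) by (induction rule: trancl_induct) (use assms(2,3) in blast)+

lemma nonnb_q:
  assumes "h < 2*b" "even h" "\<not> sadj b h u" "u \<noteq> h"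
  shows "u = h+1 \<or> u = 2*b"
proof (cases "u < h")
  case True
  then have "xadj b u h" using assms(1,2) unfolding xadj_def by auto
  then show ?thesis using assms(3) True unfolding sadj_def by blast
next
  case False
  then have hu: "h < u" using assms(4) by linarith
  show ?thesis
  proof (rule ccontr)
    assume "\<not> ?thesis"
    then have "xadj b h u" using assms(1,2) hu unfolding xadj_def by auto
    then show False using assms(3) hu unfolding sadj_def by blast
  qed
qed

lemma nonnb_p:
  assumes "2*b < h" "h \<le> 3*b" "\<not> sadj b h u" "u \<noteq> h" "u \<le> 4*b"
  shows "u = h+b \<or> u = 2*b"
proof (cases "u < h")
  case True
  show ?thesis
  proof (rule ccontr)
    assume "\<not> ?thesis"
    then have "xadj b u h" using assms(1,2) True unfolding xadj_def by auto
    then show False using assms(3) True unfolding sadj_def by blast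
  qed
next
  case False
  then have hu: "h < u" using assms(4) by linarith
  show ?thesis
  proof (rule ccontr)
    assume "\<not> ?thesis"
    then have "xadj b h u" using assms(1,2) hu unfolding xadj_def by auto
    then show False using assms(3) hu unfolding sadj_def by blast
  qed
qed

lemma heavy_adj:
  assumes "heavy b u" "heavy b v" "u \<noteq> v"
  shows "sadj b u v"
proof (cases "u < v")
  case True
  then have "xadj b u v" using assms unfolding heavy_def xadj_def by auto
  then show ?thesis using True unfolding sadj_def by blast
next
  case False
  then have vu: "v < u" using assms(3) by linarith
  then have "xadj b v u" using assms unfolding heavy_def xadj_def by auto
  then show ?thesis using vu unfolding sadj_def by blast
qed

lemma heavy_nonnb_light:
  assumes "heavy b h" "\<not> sadj b h u" "u \<noteq> h"
  shows "\<not> heavy b u"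
  using heavy_adj assms by metis

lemma heavy_nonnb:
  assumes "heavy b h" "\<not> sadj b h u" "u \<noteq> h" "u \<le> 4*b" "h \<le> 4*b"
  shows "(h < 2*b \<and> (u = h+1 \<or> u = 2*b)) \<or> (2*b < h \<and> (u = 2*b \<or> u = h + b))"
proof (cases "h < 2*b")
  case True
  then have "even h" using assms(1) unfolding heavy_def by auto
  then show ?thesis using nonnb_q[OF True _ assms(2,3)] True by blast
next
  case False
  then have "2*b < h" "h \<le> 3*b" using assms(1) unfolding heavy_def by auto
  then show ?thesis using nonnb_p[OF _ _ assms(2,3,4)] by blast
qed

lemma heavy_nonnb_adj:
  assumes "heavy b h" "\<not> sadj b h u" "\<not> sadj b h u'" "u \<noteq> h" "u' \<noteq> h" "u \<noteq> u'" "u \<le> 4*b" "u' \<le> 4*b" "h \<le> 4*b"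
  shows "sadj b u u'"
proof -
  have hu: "(h < 2*b \<and> (u = h+1 \<or> u = 2*b)) \<or> (2*b < h \<and> (u = 2*b \<or> u = h + b))"
    using heavy_nonnb[OF assms(1,2,4,7,9)] .
  have hu': "(h < 2*b \<and> (u' = h+1 \<or> u' = 2*b)) \<or> (2*b < h \<and> (u' = 2*b \<or> u' = h + b))"
    using heavy_nonnb[OF assms(1,3,5,8,9)] .
  have hev: "h < 2*b \<Longrightarrow> even h" using assms(1) unfolding heavy_def by auto
  have hb: "2*b < h \<Longrightarrow> h \<le> 3*b" using assms(1) unfolding heavy_def by auto
  show ?thesis
  proof (cases "h < 2*b")
    case True
    then have "even h" by (rule hev)
    then have o: "odd (h+1)" by simp
    have "h + 1 < 2*b" using True \<open>even h\<close> by presburger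
    then have "sadj b (h+1) (2*b)" using o unfolding sadj_def xadj_def by auto
    moreover have "sadj b (2*b) (h+1)" using calculation unfolding sadj_def by auto
    ultimately show ?thesis using hu hu' True assms(6) by auto
  next
    case False
    then have F: "2*b < h" "h \<le> 3*b" using hu hb by auto
    have "sadj b (2*b) (h+b)" using F assms(9) unfolding sadj_def xadj_def by auto
    moreover have "sadj b (h+b) (2*b)" using calculation unfolding sadj_def by auto
    ultimately show ?thesis using hu hu' F assms(6) by auto
  qed
qed

lemma c_adj_light:
  assumes "\<not> heavy b u" "u \<noteq> 2*b" "u \<le> 4*b"
  shows "sadj b (2*b) u"
  using assms unfolding heavy_def sadj_def xadj_def by presburger

lemma BA_adj:
  assumes "u < 2*b" "odd u" "3*b < v" "v \<le> 4*b"
  shows "sadj b u v"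
  using assms unfolding sadj_def xadj_def by presburger

lemma light_cases:
  assumes "\<not> heavy b u" "u \<le> 4*b"
  shows "(u < 2*b \<and> odd u) \<or> u = 2*b \<or> 3*b < u"
  using assms unfolding heavy_def by presburger



lemma stable2: "u \<in> V \<Longrightarrow> v \<in> V \<Longrightarrow> (u, v) \<notin> E \<Longrightarrow> (v, u) \<notin> E \<Longrightarrow> stable_set V E {u, v}"
  unfolding stable_set_def by auto

lemma anti2: "(u, v) \<notin> E\<^sup>+ \<Longrightarrow> (v, u) \<notin> E\<^sup>+ \<Longrightarrow> anti E {u, v}"
  unfolding anti_def by auto

lemma X_stable_nadj:
  assumes "stable_set (XVb b) (XEb b) I" "u \<in> I" "v \<in> I" "u \<noteq> v"
  shows "\<not> sadj b u v"
proof -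
  have "u \<le> 4*b" "v \<le> 4*b" using assms stable_sub unfolding XVb_def by blast+
  then show ?thesis using sadj_iff stable_noedge[OF assms(1,2,3,4)] stable_noedge[OF assms(1,3,2)] assms(4)
    by metis
qed

lemma card_Bset: "card {v. v < 2*b \<and> odd v} = b"
proof -
  have "{v. v < 2*b \<and> odd v} = (\<lambda>j. 2*j+1) ` {..<b}"
  proof
    show "{v. v < 2*b \<and> odd v} \<subseteq> (\<lambda>j. 2*j+1) ` {..<b}"
    proof
      fix v assume v: "v \<in> {v. v < 2*b \<and> odd v}"
      then have "v = 2*(v div 2) + 1" by simp
      moreover have "v div 2 < b" using v by auto
      ultimately show "v \<in> (\<lambda>j. 2*j+1) ` {..<b}" by blast
    qed
    show "(\<lambda>j. 2*j+1) ` {..<b} \<subseteq> {v. v < 2*b \<and> odd v}" by auto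
  qed
  moreover have "inj_on (\<lambda>j::nat. 2*j+1) {..<b}" by (auto simp: inj_on_def)
  ultimately show ?thesis by (simp add: card_image)
qed

lemma X_W1:
  assumes b: "b \<ge> 1" and I: "stable_set (XVb b) (XEb b) I"
  shows "sum (xw b) I \<le> b"
proof -
  have IV: "I \<subseteq> {..4*b}" using stable_sub[OF I] unfolding XVb_def .
  have fin: "finite I" using IV finite_subset by blast
  show ?thesis
  proof (cases "\<exists>h\<in>I. heavy b h")
    case True
    then obtain h where h: "h \<in> I" "heavy b h" by blast
    let ?R = "I - {h}"
    have hle: "h \<le> 4*b" using h IV by blast
    have Rl: "\<not> heavy b u" if u: "u \<in> ?R" for u
    proof -
      have "u \<noteq> h" using u by blast
      then have "\<not> sadj b h u" using X_stable_nadj[OF I h(1)] u by blast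
      then show ?thesis using heavy_nonnb_light[OF h(2)] \<open>u \<noteq> h\<close> by blast
    qed
    have Rc: "card ?R \<le> Suc 0"
    proof -
      have "\<forall>u\<in>?R. \<forall>u'\<in>?R. u = u'"
      proof (intro ballI, rule ccontr)
        fix u u' assume u: "u \<in> ?R" and u': "u' \<in> ?R" and ne: "u \<noteq> u'"
        have a1: "\<not> sadj b h u" using X_stable_nadj[OF I h(1)] u by blast
        have a2: "\<not> sadj b h u'" using X_stable_nadj[OF I h(1)] u' by blast
        have "u \<le> 4*b" "u' \<le> 4*b" using u u' IV by blast+
        then have "sadj b u u'" using heavy_nonnb_adj[OF h(2) a1 a2 _ _ ne _ _ hle] u u' by blast
        then show False using X_stable_nadj[OF I _ _ ne] u u' by blast
      qed
      then show ?thesis using card_le_Suc0_iff_eq[of ?R] fin by blast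
    qed
    have "sum (xw b) I = xw b h + sum (xw b) ?R"
      using sum.remove[OF fin h(1)] by simp
    also have "sum (xw b) ?R = card ?R"
    proof -
      have "sum (xw b) ?R = sum (\<lambda>_. 1) ?R" using Rl by (intro sum.cong) (auto simp: xw_def)
      then show ?thesis by simp
    qed
    also have "xw b h = b - 1" using h(2) by (simp add: xw_def)
    finally show ?thesis using Rc b by linarith
  next
    case False
    have s: "sum (xw b) I = card I"
    proof -
      have "sum (xw b) I = sum (\<lambda>_. 1) I" using False by (intro sum.cong) (auto simp: xw_def)
      then show ?thesis by simp
    qed
    have "card I \<le> b"
    proof (cases "2*b \<in> I")
      case True
      have "I \<subseteq> {2*b}"
      proof
        fix u assume u: "u \<in> I"
        show "u \<in> {2*b}"
        proof (rule ccontr)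
          assume "u \<notin> {2*b}"
          then have ne: "u \<noteq> 2*b" by simp
          have "sadj b (2*b) u" using c_adj_light[of b u] False u ne IV by blast
          then show False using X_stable_nadj[OF I True u] ne by metis
        qed
      qed
      then have "card I \<le> 1" using card_mono[of "{2*b}" I] by simp
      then show ?thesis using b by linarith
    next
      case nc: False
      show ?thesis
      proof (cases "\<exists>u\<in>I. u < 2*b \<and> odd u")
        case True
        then obtain u where u: "u \<in> I" "u < 2*b" "odd u" by blast
        have "I \<subseteq> {v. v < 2*b \<and> odd v}"
        proof
          fix v assume v: "v \<in> I"
          have lc: "(v < 2*b \<and> odd v) \<or> v = 2*b \<or> 3*b < v"
            using light_cases[of b v] False v IV by blast
          show "v \<in> {v. v < 2*b \<and> odd v}"
          proof (rule ccontr)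
            assume nv: "v \<notin> {v. v < 2*b \<and> odd v}"
            then have v3: "3*b < v" using lc nc v by auto
            have "v \<le> 4*b" using v IV by blast
            then have sa: "sadj b u v" using BA_adj[OF u(2,3) v3] by blast
            have "u \<noteq> v" using u(2) v3 by linarith
            then show False using X_stable_nadj[OF I u(1) v] sa by blast
          qed
        qed
        then have "card I \<le> card {v. v < 2*b \<and> odd v}" by (intro card_mono) auto
        then show ?thesis using card_Bset by simp
      next
        case False2: False
        have "I \<subseteq> {3*b<..4*b}"
        proof
          fix v assume v: "v \<in> I"
          have "(v < 2*b \<and> odd v) \<or> v = 2*b \<or> 3*b < v"
            using light_cases[of b v] False v IV by blast
          then show "v \<in> {3*b<..4*b}" using False2 nc v IV by auto
        qed
        then have "card I \<le> card {3*b<..4*b}" by (intro card_mono) auto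
        then show ?thesis by simp
      qed
    qed
    then show ?thesis using s by simp
  qed
qed



lemma X_arc_lt: "(u, v) \<in> XEb b \<Longrightarrow> u < v" by (simp add: XEb_iff)

lemma X_noarc_A: "3*b < u \<Longrightarrow> (u, v) \<notin> XEb b"
  by (simp add: XEb_iff xadj_def)

lemma Aset_anti: "anti (XEb b) {3*b<..4*b}"
  unfolding anti_def
proof (intro ballI impI notI)
  fix u v assume u: "u \<in> {3*b<..4*b}" and r: "(u, v) \<in> (XEb b)\<^sup>+"
  obtain w where "(u, w) \<in> XEb b" using tranclD[OF r] by blast
  then show False using X_noarc_A[of b u w] u by simp
qed

lemma Aset_stable: "stable_set (XVb b) (XEb b) {3*b<..4*b}"
  unfolding stable_set_def XVb_def using X_noarc_A by auto

lemma Bset_stable: "stable_set (XVb b) (XEb b) {v. v < 2*b \<and> odd v}"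
  unfolding stable_set_def XVb_def by (auto simp: XEb_iff xadj_def)

lemma sum_light: "(\<forall>v\<in>S. \<not> heavy b v) \<Longrightarrow> sum (xw b) S = card S"
proof -
  assume "\<forall>v\<in>S. \<not> heavy b v"
  then have "sum (xw b) S = sum (\<lambda>_. 1) S" by (intro sum.cong) (auto simp: xw_def)
  then show ?thesis by simp
qed

lemma Aset_sum: "sum (xw b) {3*b<..4*b} = b"
proof -
  have "\<forall>v\<in>{3*b<..4*b}. \<not> heavy b v" unfolding heavy_def by auto
  then show ?thesis using sum_light by simp
qed

lemma Bset_sum: "sum (xw b) {v. v < 2*b \<and> odd v} = b"
proof -
  have "\<forall>v\<in>{v. v < 2*b \<and> odd v}. \<not> heavy b v" unfolding heavy_def by auto
  then show ?thesis using sum_light card_Bset by metis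
qed

lemma pair_sum: "u \<noteq> v \<Longrightarrow> sum (xw b) {u, v} = xw b u + xw b v" by simp

lemma closed_reach':
  assumes "(u, v) \<in> E\<^sup>+" "\<forall>w. (u, w) \<in> E \<longrightarrow> w \<in> Z" "\<forall>x y. (x, y) \<in> E \<longrightarrow> x \<in> Z \<longrightarrow> y \<in> Z"
  shows "v \<in> Z"
  using closed_reach[of u v E Z] assms by blast

lemma X_C:
  assumes b: "b \<ge> 1" and Y: "Y \<subseteq> XVb b"
    and hit: "\<forall>I. stable_set (XVb b) (XEb b) I \<and> sum (xw b) I = b \<longrightarrow> Y \<inter> I \<noteq> {}"
  shows "\<exists>I\<subseteq>Y. stable_set (XVb b) (XEb b) I \<and> sum (xw b) I = b \<and> anti (XEb b) I"
proof (cases "2*b \<in> Y")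
  case True
  show ?thesis
  proof (cases "\<exists>j<b. 2*b+1+j \<in> Y")
    case True2: True
    then obtain j where j: "j < b" "2*b+1+j \<in> Y" by blast
    let ?I = "{2*b+1+j, 2*b}"
    have st: "stable_set (XVb b) (XEb b) ?I"
      by (rule stable2) (use j in \<open>auto simp: XVb_def XEb_iff xadj_def\<close>)
    have sm: "sum (xw b) ?I = b" using b j by (simp add: xw_def heavy_def)
    have a1: "(2*b, 2*b+1+j) \<notin> (XEb b)\<^sup>+"
    proof
      assume r: "(2*b, 2*b+1+j) \<in> (XEb b)\<^sup>+"
      have "2*b+1+j \<in> {v. 3*b < v}"
      proof (rule closed_reach'[OF r])
        show "\<forall>w. (2*b, w) \<in> XEb b \<longrightarrow> w \<in> {v. 3*b < v}" by (auto simp: XEb_iff xadj_def)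
        show "\<forall>x y. (x, y) \<in> XEb b \<longrightarrow> x \<in> {v. 3*b < v} \<longrightarrow> y \<in> {v. 3*b < v}"
          using X_noarc_A by auto
      qed
      then show False using j by simp
    qed
    have a2: "(2*b+1+j, 2*b) \<notin> (XEb b)\<^sup>+" using X_mono by fastforce
    have an: "anti (XEb b) ?I" by (rule anti2[OF a2 a1])
    have sub: "?I \<subseteq> Y" using True j(2) by simp
    show ?thesis by (rule exI[of _ ?I]) (use sub st sm an in simp)
  next
    case False2: False
    have "{3*b<..4*b} \<subseteq> Y"
    proof
      fix v assume v: "v \<in> {3*b<..4*b}"
      define j where "j = v - 3*b - 1"
      have j: "j < b" "v = 3*b+1+j" using v unfolding j_def by auto
      let ?I = "{2*b+1+j, 3*b+1+j}"
      have st: "stable_set (XVb b) (XEb b) ?I"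
        by (rule stable2) (use j in \<open>auto simp: XVb_def XEb_iff xadj_def\<close>)
      have sm: "sum (xw b) ?I = b" using b j by (simp add: xw_def heavy_def)
      have "Y \<inter> ?I \<noteq> {}" using hit st sm by blast
      then show "v \<in> Y" using False2 j by auto
    qed
    then show ?thesis by (intro exI[of _ "{3*b<..4*b}"]) (simp add: Aset_stable Aset_sum Aset_anti)
  qed
next
  case False
  have q: "2*j \<in> Y" if j: "j < b" for j
  proof -
    let ?I = "{2*j, 2*b}"
    have st: "stable_set (XVb b) (XEb b) ?I"
      by (rule stable2) (use j in \<open>auto simp: XVb_def XEb_iff xadj_def\<close>)
    have sm: "sum (xw b) ?I = b" using b j by (simp add: xw_def heavy_def)
    have "Y \<inter> ?I \<noteq> {}" using hit st sm by blast
    then show ?thesis using False by auto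
  qed
  show ?thesis
  proof (cases "\<exists>j<b. 2*j+1 \<in> Y")
    case True
    then obtain j where j: "j < b" "2*j+1 \<in> Y" by blast
    let ?I = "{2*j, 2*j+1}"
    have st: "stable_set (XVb b) (XEb b) ?I"
      by (rule stable2) (use j in \<open>auto simp: XVb_def XEb_iff xadj_def\<close>)
    have sm: "sum (xw b) ?I = b" using b j by (simp add: xw_def heavy_def)
    have a1: "(2*j, 2*j+1) \<notin> (XEb b)\<^sup>+"
    proof
      assume r: "(2*j, 2*j+1) \<in> (XEb b)\<^sup>+"
      have "2*j+1 \<in> {v. 2*j+1 < v}"
      proof (rule closed_reach'[OF r])
        show "\<forall>w. (2*j, w) \<in> XEb b \<longrightarrow> w \<in> {v. 2*j+1 < v}"
          using j by (auto simp: XEb_iff xadj_def)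
        show "\<forall>x y. (x, y) \<in> XEb b \<longrightarrow> x \<in> {v. 2*j+1 < v} \<longrightarrow> y \<in> {v. 2*j+1 < v}"
          by (auto simp: XEb_iff)
      qed
      then show False by simp
    qed
    have a2: "(2*j+1, 2*j) \<notin> (XEb b)\<^sup>+" using X_mono by fastforce
    have an: "anti (XEb b) ?I" by (rule anti2[OF a1 a2])
    have sub: "?I \<subseteq> Y" using q[OF j(1)] j(2) by simp
    show ?thesis by (rule exI[of _ ?I]) (use sub st sm an in simp)
  next
    case False2: False
    have "Y \<inter> {v. v < 2*b \<and> odd v} = {}"
    proof (rule ccontr)
      assume "Y \<inter> {v. v < 2*b \<and> odd v} \<noteq> {}"
      then obtain v where v: "v \<in> Y" "v < 2*b" "odd v" by blast
      then have "v = 2*(v div 2) + 1" "v div 2 < b" by auto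
      then show False using False2 v by metis
    qed
    then show ?thesis using hit Bset_stable Bset_sum by blast
  qed
qed

lemma X_W2: "\<exists>I. stable_set (XVb b) (XEb b) I \<and> sum (xw b) I = b"
  using Aset_stable Aset_sum by blast



lemma propR_one: "propR {0::nat} {} 1"
  unfolding propR_def
proof (intro conjI allI impI)
  show "digraph {0::nat} {}" unfolding digraph_def by simp
  show "acyc ({} :: (nat \<times> nat) set)" unfolding acyc_def by simp
  show "\<exists>S. stable_set {0::nat} {} S \<and> card S = 1"
    by (rule exI[of _ "{0}"]) (simp add: stable_set_def)
  fix S assume "stable_set {0::nat} {} S"
  then have "S \<subseteq> {0}" by (rule stable_sub)
  then show "card S \<le> 1" using card_mono[of "{0::nat}" S] by simp
next
  fix B :: "nat set" assume B: "B \<subseteq> {0}" and h: "\<forall>S. stable_set {0} {} S \<and> card S = 1 \<longrightarrow> B \<inter> S \<noteq> {}"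
  have "stable_set {0::nat} {} {0}" by (simp add: stable_set_def)
  moreover have "card {0::nat} = 1" by simp
  ultimately have "B \<inter> {0} \<noteq> {}" using h by blast
  then have "B = {0}" using B by blast
  moreover have "anti ({} :: (nat \<times> nat) set) {0}" unfolding anti_def by simp
  ultimately show "\<exists>A\<subseteq>B. card A = 1 \<and> anti {} A" by auto
qed

fun Dg :: "nat \<Rightarrow> nat set \<times> (nat \<times> nat) set" where
  "Dg 0 = ({0}, {})"
| "Dg (Suc n) =
     (pv (XVb (n+2)) (\<lambda>x. if heavy (n+2) x then fst (Dg n) else {0}),
      pe (XVb (n+2)) (XEb (n+2)) (\<lambda>x. if heavy (n+2) x then fst (Dg n) else {0})
         (\<lambda>x. if heavy (n+2) x then snd (Dg n) else {}))"

lemma Dg_propR: "propR (fst (Dg n)) (snd (Dg n)) (Suc n)"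
proof (induction n)
  case 0
  show ?case using propR_one by simp
next
  case (Suc n)
  let ?b = "n + 2"
  let ?Vf = "\<lambda>x. if heavy ?b x then fst (Dg n) else {0}"
  let ?Ef = "\<lambda>x. if heavy ?b x then snd (Dg n) else {}"
  have fib: "\<forall>x\<in>XVb ?b. propR (?Vf x) (?Ef x) (xw ?b x)"
  proof
    fix x assume "x \<in> XVb ?b"
    show "propR (?Vf x) (?Ef x) (xw ?b x)"
    proof (cases "heavy ?b x")
      case True
      then show ?thesis using Suc.IH by (simp add: xw_def)
    next
      case False
      then show ?thesis using propR_one by (simp add: xw_def)
    qed
  qed
  have b1: "?b \<ge> 1" by simp
  have "propR (pv (XVb ?b) ?Vf) (pe (XVb ?b) (XEb ?b) ?Vf ?Ef) ?b"
  proof (rule prod_propR[OF X_digraph X_acyc fib])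
    show "\<forall>I. stable_set (XVb ?b) (XEb ?b) I \<longrightarrow> sum (xw ?b) I \<le> ?b"
      using X_W1[OF b1] by blast
    show "\<exists>I. stable_set (XVb ?b) (XEb ?b) I \<and> sum (xw ?b) I = ?b" by (rule X_W2)
    show "\<forall>Y\<subseteq>XVb ?b. (\<forall>I. stable_set (XVb ?b) (XEb ?b) I \<and> sum (xw ?b) I = ?b \<longrightarrow> Y \<inter> I \<noteq> {}) \<longrightarrow>
      (\<exists>I\<subseteq>Y. stable_set (XVb ?b) (XEb ?b) I \<and> sum (xw ?b) I = ?b \<and> anti (XEb ?b) I)"
      using X_C[OF b1] by blast
  qed
  then show ?case by simp
qed

theorem theorem1:
  fixes k :: nat
  assumes "k \<ge> 1"
  shows "\<exists>(V :: nat set) E. digraph V E \<and> stability_number V E = k \<and>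
    (\<forall>ps. length ps = k - 1 \<and> (\<forall>p\<in>set ps. dipath V E p) \<longrightarrow>
       (let (V', E') = delete_vertices V E (\<Union>p\<in>set ps. set p)
        in stability_number V' E' = k))"
proof -
  have R: "propR (fst (Dg (k - 1))) (snd (Dg (k - 1))) k"
    using Dg_propR[of "k - 1"] assms by simp
  show ?thesis
    using propR_main[OF R assms] propR_digraph[OF R] by blast
qed


end
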